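(* For every general channel $\mathbf W$ and every real $R$, \[ C_p(R\mid\mathbf W)=\inf_{\mathbf P}\lim_{\gamma\downarrow0}I_p(R-\gamma\mid\mathbf P,\mathbf W)=\inf_{\mathbf P}\sup_{\mathbf Q}\lim_{\gamma\downarrow0}J_p(R-\gamma\mid\mathbf P,\mathbf Q,\mathbf W), \] and for every $0\le\epsilon<1$, \[ C(\epsilon\mid\mathbf W)=\sup_{\mathbf P}I(\epsilon\mid\mathbf P,\mathbf W)=\sup_{\mathbf P}\inf_{\mathbf Q}J(\epsilon\mid\mathbf P,\mathbf Q,\mathbf W). \]
   Context: A general channel $\mathbf W=\{W^n\}_{n\ge1}$ consists of finite (or countable) input sets $\mathcal X_n$, output sets $\mathcal Y_n$ and conditional distributions $W^n_x=W^n(\cdot|x)$ on $\mathcal Y_n$, $x\in\mathcal X_n$. $\mathbf P=\{P^n\}$ ranges over sequences of distributions on $\mathcal X_n$, $\mathbf Q=\{Q^n\}$ over sequences of distributions on $\mathcal Y_n$; $W^n_{P^n}(y)=\sum_xP^n(x)W^n_x(y)$. Logarithms natural. Define $I_p(R|\mathbf P,\mathbf W)=\limsup_n\sum_xP^n(x)W^n_x\{y:\frac1n\log\frac{W^n_x(y)}{W^n_{P^n}(y)}<R\}$, $I(\epsilon|\mathbf P,\mathbf W)=\sup\{R: I_p(R|\mathbf P,\mathbf W)\le\epsilon\}$, $J_p(R|\mathbf P,\mathbf Q,\mathbf W)=\limsup_n\sum_xP^n(x)W^n_x\{y:\frac1n\log\frac{W^n_x(y)}{Q^n(y)}<R\}$,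 $J(\epsilon|\mathbf P,\mathbf Q,\mathbf W)=\sup\{R:J_p(R|\mathbf P,\mathbf Q,\mathbf W)\le\epsilon\}$. A code for $W^n$ is $\Phi=(N,\phi,\{\mathcal D_i\}_{i=1}^N)$, $\phi:\{1..N\}\to\mathcal X_n$, pairwise disjoint $\mathcal D_i\subset\mathcal Y_n$; $|\Phi|=N$; $P_{e,W^n}(\Phi)=\frac1N\sum_i(1-W^n_{\phi(i)}(\mathcal D_i))$. Over all code sequences $\{\Phi_n\}$: $C_p(R|\mathbf W)=\inf\{\limsup_nP_{e,W^n}(\Phi_n):\liminf_n\frac1n\log|\Phi_n|\ge R\}$, $C(\epsilon|\mathbf W)=\sup\{\liminf_n\frac1n\log|\Phi_n|:\limsup_nP_{e,W^n}(\Phi_n)\le\epsilon\}$. *)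

theory Defs
  imports "HOL-Probability.Probability"
begin

definition channel :: "(nat \<Rightarrow> 'a set) \<Rightarrow> (nat \<Rightarrow> 'b set) \<Rightarrow> (nat \<Rightarrow> 'a \<Rightarrow> 'b pmf) \<Rightarrow> bool" where
  "channel X Y W \<longleftrightarrow> (\<forall>n. countable (X n) \<and> countable (Y n) \<and> X n \<noteq> {} \<and>
      (\<forall>x\<in>X n. set_pmf (W n x) \<subseteq> Y n))"

definition input_seqs :: "(nat \<Rightarrow> 'a set) \<Rightarrow> (nat \<Rightarrow> 'a pmf) set" where
  "input_seqs X = {P. \<forall>n. set_pmf (P n) \<subseteq> X n}"

definition output_seqs :: "(nat \<Rightarrow> 'b set) \<Rightarrow> (nat \<Rightarrow> 'b pmf) set" where
  "output_seqs Y = {Q. \<forall>n. set_pmf (Q n) \<subseteq> Y n}"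

definition out_dist :: "'a pmf \<Rightarrow> ('a \<Rightarrow> 'b pmf) \<Rightarrow> 'b pmf" where
  "out_dist P V = bind_pmf P V"

definition Ip :: "(nat \<Rightarrow> 'a \<Rightarrow> 'b pmf) \<Rightarrow> (nat \<Rightarrow> 'a pmf) \<Rightarrow> real \<Rightarrow> ereal" where
  "Ip W P R = limsup (\<lambda>n. ereal (measure_pmf.expectation (P n) (\<lambda>x.
      measure_pmf.prob (W n x)
        {y. ln (pmf (W n x) y / pmf (out_dist (P n) (W n)) y) / real n < R})))"

definition I_eps :: "(nat \<Rightarrow> 'a \<Rightarrow> 'b pmf) \<Rightarrow> (nat \<Rightarrow> 'a pmf) \<Rightarrow> real \<Rightarrow> ereal" where
  "I_eps W P \<epsilon> = Sup {ereal R | R. Ip W P R \<le> ereal \<epsilon>}"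

text \<open>J_p(R|P,Q,W).  Where Q^n(y) = 0 the information density is +infinity, hence
  such y never satisfy the event.\<close>
definition Jp :: "(nat \<Rightarrow> 'a \<Rightarrow> 'b pmf) \<Rightarrow> (nat \<Rightarrow> 'a pmf) \<Rightarrow> (nat \<Rightarrow> 'b pmf) \<Rightarrow> real \<Rightarrow> ereal" where
  "Jp W P Q R = limsup (\<lambda>n. ereal (measure_pmf.expectation (P n) (\<lambda>x.
      measure_pmf.prob (W n x)
        {y. 0 < pmf (Q n) y \<and> ln (pmf (W n x) y / pmf (Q n) y) / real n < R})))"

definition J_eps :: "(nat \<Rightarrow> 'a \<Rightarrow> 'b pmf) \<Rightarrow> (nat \<Rightarrow> 'a pmf) \<Rightarrow> (nat \<Rightarrow> 'b pmf) \<Rightarrow> real \<Rightarrow> ereal" where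
  "J_eps W P Q \<epsilon> = Sup {ereal R | R. Jp W P Q R \<le> ereal \<epsilon>}"

text \<open>A code for W^n: (N, phi, D) with messages 1..N, codewords phi i in X n and
  pairwise disjoint decoding sets D i contained in Y n.\<close>
type_synonym ('a, 'b) code = "nat \<times> (nat \<Rightarrow> 'a) \<times> (nat \<Rightarrow> 'b set)"

definition is_code :: "'a set \<Rightarrow> 'b set \<Rightarrow> ('a, 'b) code \<Rightarrow> bool" where
  "is_code Xn Yn c = (case c of (N, \<phi>, D) \<Rightarrow>
      1 \<le> N \<and> (\<forall>i\<in>{1..N}. \<phi> i \<in> Xn \<and> D i \<subseteq> Yn) \<and> disjoint_family_on D {1..N})"

definition code_size :: "('a, 'b) code \<Rightarrow> nat" where
  "code_size c = fst c"

definition err_prob :: "('a \<Rightarrow> 'b pmf) \<Rightarrow> ('a, 'b) code \<Rightarrow> real" where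
  "err_prob V c = (case c of (N, \<phi>, D) \<Rightarrow>
      (\<Sum>i=1..N. 1 - measure_pmf.prob (V (\<phi> i)) (D i)) / real N)"

definition code_seqs :: "(nat \<Rightarrow> 'a set) \<Rightarrow> (nat \<Rightarrow> 'b set) \<Rightarrow> (nat \<Rightarrow> ('a, 'b) code) set" where
  "code_seqs X Y = {\<Phi>. \<forall>n. is_code (X n) (Y n) (\<Phi> n)}"

definition rate :: "(nat \<Rightarrow> ('a, 'b) code) \<Rightarrow> ereal" where
  "rate \<Phi> = liminf (\<lambda>n. ereal (ln (real (code_size (\<Phi> n))) / real n))"

definition error :: "(nat \<Rightarrow> 'a \<Rightarrow> 'b pmf) \<Rightarrow> (nat \<Rightarrow> ('a, 'b) code) \<Rightarrow> ereal" where
  "error W \<Phi> = limsup (\<lambda>n. ereal (err_prob (W n) (\<Phi> n)))"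

definition Cp :: "(nat \<Rightarrow> 'a set) \<Rightarrow> (nat \<Rightarrow> 'b set) \<Rightarrow> (nat \<Rightarrow> 'a \<Rightarrow> 'b pmf) \<Rightarrow> real \<Rightarrow> ereal" where
  "Cp X Y W R = Inf {error W \<Phi> | \<Phi>. \<Phi> \<in> code_seqs X Y \<and> rate \<Phi> \<ge> ereal R}"

definition C_eps :: "(nat \<Rightarrow> 'a set) \<Rightarrow> (nat \<Rightarrow> 'b set) \<Rightarrow> (nat \<Rightarrow> 'a \<Rightarrow> 'b pmf) \<Rightarrow> real \<Rightarrow> ereal" where
  "C_eps X Y W \<epsilon> = Sup {rate \<Phi> | \<Phi>. \<Phi> \<in> code_seqs X Y \<and> error W \<Phi> \<le> ereal \<epsilon>}"

end

theory Submission
  imports Defs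
begin


lemma prob_bind_pmf:
  "measure_pmf.prob (bind_pmf P V) A = measure_pmf.expectation P (\<lambda>x. measure_pmf.prob (V x) A)"
proof -
  have "ennreal (measure_pmf.prob (bind_pmf P V) A) = (\<integral>\<^sup>+ x. ennreal (measure_pmf.prob (V x) A) \<partial>measure_pmf P)"
    using emeasure_bind_pmf[of P V A] by (simp add: measure_pmf.emeasure_eq_measure)
  also have "\<dots> = ennreal (measure_pmf.expectation P (\<lambda>x. measure_pmf.prob (V x) A))"
    by (rule nn_integral_eq_integral) (auto intro!: measure_pmf.integrable_const_bound[where B=1])
  finally show ?thesis by (simp add: integral_nonneg_AE)
qed

lemma prob_le_scaled:
  fixes p q :: "'b pmf"
  assumes "\<And>y. y \<in> A \<Longrightarrow> pmf p y \<le> k * pmf q y" "0 \<le> k"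
  shows "measure_pmf.prob p A \<le> k * measure_pmf.prob q A"
proof -
  have "ennreal (measure_pmf.prob p A) = (\<integral>\<^sup>+ y. ennreal (pmf p y) * indicator A y \<partial>count_space UNIV)"
    by (simp add: measure_pmf.emeasure_eq_measure[symmetric] nn_integral_measure_pmf[symmetric])
  also have "\<dots> \<le> (\<integral>\<^sup>+ y. ennreal k * (ennreal (pmf q y) * indicator A y) \<partial>count_space UNIV)"
    apply (rule nn_integral_mono)
    using assms by (auto simp: indicator_def ennreal_mult[symmetric])
  also have "\<dots> = ennreal k * (\<integral>\<^sup>+ y. ennreal (pmf q y) * indicator A y \<partial>count_space UNIV)"
    by (rule nn_integral_cmult) auto
  also have "\<dots> = ennreal (k * measure_pmf.prob q A)"
    by (simp add: measure_pmf.emeasure_eq_measure[symmetric] nn_integral_measure_pmf[symmetric] ennreal_mult assms)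
  finally show ?thesis by (simp add: assms)
qed

lemma integrable_prob [simp, intro]:
  "integrable (measure_pmf P) (\<lambda>x. measure_pmf.prob (V x) (A x))"
  by (rule measure_pmf.integrable_const_bound[where B=1]) auto

lemma ratio_iff:
  assumes "0 < a" "0 < b" "0 < n"
  shows "(ln (a / b) / real n < r) \<longleftrightarrow> (a < exp (real n * r) * b)"
proof -
  have "(ln (a / b) / real n < r) \<longleftrightarrow> ln (a / b) < real n * r"
    using assms by (simp add: pos_divide_less_eq mult.commute)
  also have "\<dots> \<longleftrightarrow> ln (a / b) < ln (exp (real n * r))" by simp
  also have "\<dots> \<longleftrightarrow> a / b < exp (real n * r)"
    by (rule ln_less_cancel_iff) (use assms in auto)
  also have "\<dots> \<longleftrightarrow> a < exp (real n * r) * b"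
    using assms by (simp add: pos_divide_less_eq)
  finally show ?thesis .
qed

definition Fd :: "('a \<Rightarrow> 'b pmf) \<Rightarrow> 'a pmf \<Rightarrow> nat \<Rightarrow> real \<Rightarrow> real" where
  "Fd V P n R = measure_pmf.expectation P (\<lambda>x. measure_pmf.prob (V x)
        {y. ln (pmf (V x) y / pmf (out_dist P V) y) / real n < R})"

definition Gd :: "('a \<Rightarrow> 'b pmf) \<Rightarrow> 'a pmf \<Rightarrow> 'b pmf \<Rightarrow> nat \<Rightarrow> real \<Rightarrow> real" where
  "Gd V P Q n R = measure_pmf.expectation P (\<lambda>x. measure_pmf.prob (V x)
        {y. 0 < pmf Q y \<and> ln (pmf (V x) y / pmf Q y) / real n < R})"

lemma Ip_Fd: "Ip W P R = limsup (\<lambda>n. ereal (Fd (W n) (P n) n R))"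
  by (simp add: Ip_def Fd_def)

lemma Jp_Gd: "Jp W P Q R = limsup (\<lambda>n. ereal (Gd (W n) (P n) (Q n) n R))"
  by (simp add: Jp_def Gd_def)

lemma pos_out_dist:
  assumes "x \<in> set_pmf P" "y \<in> set_pmf (V x)"
  shows "0 < pmf (out_dist P V) y"
proof -
  have "y \<in> set_pmf (out_dist P V)" using assms by (auto simp: out_dist_def set_bind_pmf)
  thus ?thesis by (simp add: pmf_positive)
qed

lemma Fd_Gd: "Fd V P n R = Gd V P (out_dist P V) n R"
proof -
  have "measure_pmf.prob (V x) {y. ln (pmf (V x) y / pmf (out_dist P V) y) / real n < R}
      = measure_pmf.prob (V x) {y. 0 < pmf (out_dist P V) y \<and> ln (pmf (V x) y / pmf (out_dist P V) y) / real n < R}"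
    if x: "x \<in> set_pmf P" for x
  proof -
    have "{y. ln (pmf (V x) y / pmf (out_dist P V) y) / real n < R} \<inter> set_pmf (V x)
        = {y. 0 < pmf (out_dist P V) y \<and> ln (pmf (V x) y / pmf (out_dist P V) y) / real n < R} \<inter> set_pmf (V x)"
      using pos_out_dist[OF x] by auto
    thus ?thesis by (subst (1 2) measure_Int_set_pmf[symmetric]) simp
  qed
  thus ?thesis unfolding Fd_def Gd_def
    by (intro integral_cong_AE) (auto simp: AE_measure_pmf_iff)
qed

lemma Ip_Jp: "Ip W P R = Jp W P (\<lambda>n. out_dist (P n) (W n)) R"
  by (simp add: Ip_Fd Jp_Gd Fd_Gd)



lemma feinstein:
  fixes V :: "'a \<Rightarrow> 'b pmf" and P :: "'a pmf"
  assumes PX: "set_pmf P \<subseteq> Xn" and VY: "\<And>x. x \<in> Xn \<Longrightarrow> set_pmf (V x) \<subseteq> Yn"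
    and n: "0 < n" and M: "1 \<le> M"
  shows "\<exists>c. is_code Xn Yn c \<and> code_size c = M \<and>
             err_prob V c \<le> Fd V P n r + real M / exp (real n * r)"
proof -
  define c0 where "c0 = exp (real n * r)"
  define Wp where "Wp = out_dist P V"
  define E where "E x = {y. ln (pmf (V x) y / pmf Wp y) / real n < r}" for x
  define T where "T x = {y \<in> Yn. c0 * pmf Wp y \<le> pmf (V x) y}" for x
  define \<beta> where "\<beta> = Fd V P n r"
  define \<epsilon> where "\<epsilon> = \<beta> + real M / c0"
  have c0: "0 < c0" by (simp add: c0_def)
  have \<beta>': "\<beta> = measure_pmf.expectation P (\<lambda>x. measure_pmf.prob (V x) (E x))"
    by (simp add: \<beta>_def Fd_def E_def Wp_def)
  have TE: "measure_pmf.prob (V x) (T x) = 1 - measure_pmf.prob (V x) (E x)"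
    if x: "x \<in> set_pmf P" for x
  proof -
    have "T x \<inter> set_pmf (V x) = (UNIV - E x) \<inter> set_pmf (V x)"
    proof (intro set_eqI)
      fix y
      show "y \<in> T x \<inter> set_pmf (V x) \<longleftrightarrow> y \<in> (UNIV - E x) \<inter> set_pmf (V x)"
      proof (cases "y \<in> set_pmf (V x)")
        case True
        have a: "0 < pmf (V x) y" using True by (simp add: pmf_positive)
        have b: "0 < pmf Wp y" using pos_out_dist[of x P y V, OF x True] by (simp add: Wp_def)
        have yY: "y \<in> Yn" using VY[of x] PX x True by auto
        show ?thesis using True ratio_iff[OF a b n, of r] yY
          by (auto simp: T_def E_def c0_def not_less)
      qed auto
    qed
    hence "measure_pmf.prob (V x) (T x) = measure_pmf.prob (V x) (UNIV - E x)"
      by (subst (1 2) measure_Int_set_pmf[symmetric]) simp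
    also have "\<dots> = 1 - measure_pmf.prob (V x) (E x)"
      using measure_pmf.prob_compl[of "E x" "V x"] by simp
    finally show ?thesis .
  qed
  have intT: "measure_pmf.expectation P (\<lambda>x. measure_pmf.prob (V x) (T x)) = 1 - \<beta>"
  proof -
    have "measure_pmf.expectation P (\<lambda>x. measure_pmf.prob (V x) (T x))
        = measure_pmf.expectation P (\<lambda>x. 1 - measure_pmf.prob (V x) (E x))"
      by (intro integral_cong_AE) (auto simp: AE_measure_pmf_iff TE)
    also have "\<dots> = 1 - \<beta>" unfolding \<beta>' by (subst Bochner_Integration.integral_diff) (auto simp: lebesgue_integral_const)
    finally show ?thesis .
  qed
  have DW: "measure_pmf.prob Wp A \<le> 1 / c0" if "A \<subseteq> T x" for A x
  proof -
    have "measure_pmf.prob Wp A \<le> (1 / c0) * measure_pmf.prob (V x) A"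
      by (rule prob_le_scaled) (use that c0 in \<open>auto simp: T_def field_simps\<close>)
    also have "\<dots> \<le> 1 / c0" using c0 by (simp add: divide_right_mono)
    finally show ?thesis .
  qed
  have ind: "\<exists>\<phi> D. (\<forall>i\<in>{1..k}. \<phi> i \<in> set_pmf P \<and> D i \<subseteq> T (\<phi> i) \<and>
                 1 - \<epsilon> \<le> measure_pmf.prob (V (\<phi> i)) (D i)) \<and> disjoint_family_on D {1..k}"
    if "k \<le> M" for k
    using that
  proof (induction k)
    case 0
    show ?case by (auto simp: disjoint_family_on_def)
  next
    case (Suc k)
    then obtain \<phi> D where hyp: "\<forall>i\<in>{1..k}. \<phi> i \<in> set_pmf P \<and> D i \<subseteq> T (\<phi> i) \<and>
                 1 - \<epsilon> \<le> measure_pmf.prob (V (\<phi> i)) (D i)" and dj: "disjoint_family_on D {1..k}"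
      by auto
    define U where "U = (\<Union>i\<in>{1..k}. D i)"
    have "\<exists>x\<in>set_pmf P. 1 - \<epsilon> \<le> measure_pmf.prob (V x) (T x - U)"
    proof (rule ccontr)
      assume "\<not> ?thesis"
      hence lt: "\<And>x. x \<in> set_pmf P \<Longrightarrow> measure_pmf.prob (V x) (T x - U) \<le> 1 - \<epsilon>" by auto
      have "1 - \<beta> = measure_pmf.expectation P (\<lambda>x. measure_pmf.prob (V x) (T x))"
        using intT by simp
      also have "\<dots> \<le> measure_pmf.expectation P (\<lambda>x. (1 - \<epsilon>) + measure_pmf.prob (V x) U)"
      proof (intro integral_mono_AE)
        show "AE x in measure_pmf P. measure_pmf.prob (V x) (T x) \<le> 1 - \<epsilon> + measure_pmf.prob (V x) U"
        proof (unfold AE_measure_pmf_iff, intro ballI)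
          fix x assume x: "x \<in> set_pmf P"
          have "measure_pmf.prob (V x) (T x) \<le> measure_pmf.prob (V x) ((T x - U) \<union> U)"
            by (rule measure_pmf.finite_measure_mono) auto
          also have "\<dots> \<le> measure_pmf.prob (V x) (T x - U) + measure_pmf.prob (V x) U"
            by (rule measure_Un_le) auto
          finally show "measure_pmf.prob (V x) (T x) \<le> 1 - \<epsilon> + measure_pmf.prob (V x) U"
            using lt[OF x] by linarith
        qed
      qed auto
      also have "\<dots> = (1 - \<epsilon>) + measure_pmf.prob Wp U"
        by (subst Bochner_Integration.integral_add) (auto simp: Wp_def out_dist_def prob_bind_pmf lebesgue_integral_const)
      also have "measure_pmf.prob Wp U \<le> (\<Sum>i\<in>{1..k}. measure_pmf.prob Wp (D i))"
        unfolding U_def by (rule measure_pmf.finite_measure_subadditive_finite) auto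
      also have "\<dots> \<le> (\<Sum>i\<in>{1..k}. 1 / c0)"
        by (rule sum_mono) (use hyp in \<open>force intro: DW\<close>)
      also have "\<dots> = real k / c0" by simp
      finally have "1 - \<beta> \<le> 1 - \<epsilon> + real k / c0" by simp
      hence "real M / c0 \<le> real k / c0" by (simp add: \<epsilon>_def)
      hence "real M \<le> real k" using c0 by (simp add: divide_right_mono_neg divide_le_cancel)
      thus False using Suc.prems by simp
    qed
    then obtain x where x: "x \<in> set_pmf P" and px: "1 - \<epsilon> \<le> measure_pmf.prob (V x) (T x - U)"
      by auto
    define \<phi>' where "\<phi>' = \<phi>(Suc k := x)"
    define D' where "D' = D(Suc k := T x - U)"
    have "\<forall>i\<in>{1..Suc k}. \<phi>' i \<in> set_pmf P \<and> D' i \<subseteq> T (\<phi>' i) \<and>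
                 1 - \<epsilon> \<le> measure_pmf.prob (V (\<phi>' i)) (D' i)"
    proof
      fix i assume i: "i \<in> {1..Suc k}"
      show "\<phi>' i \<in> set_pmf P \<and> D' i \<subseteq> T (\<phi>' i) \<and>
                 1 - \<epsilon> \<le> measure_pmf.prob (V (\<phi>' i)) (D' i)"
      proof (cases "i = Suc k")
        case True thus ?thesis using x px by (simp add: \<phi>'_def D'_def Diff_subset)
      next
        case False
        hence "i \<in> {1..k}" using i by auto
        thus ?thesis using hyp False by (simp add: \<phi>'_def D'_def)
      qed
    qed
    moreover have "disjoint_family_on D' {1..Suc k}"
    proof (unfold disjoint_family_on_def, intro ballI impI)
      fix i j assume i: "i \<in> {1..Suc k}" and j: "j \<in> {1..Suc k}" and ij: "i \<noteq> j"
      show "D' i \<inter> D' j = {}"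
      proof (cases "i = Suc k")
        case True
        hence "j \<in> {1..k}" using j ij by auto
        hence "D j \<subseteq> U" by (auto simp: U_def)
        thus ?thesis using True ij by (auto simp: D'_def)
      next
        case False
        hence i': "i \<in> {1..k}" using i by auto
        show ?thesis
        proof (cases "j = Suc k")
          case True
          have "D i \<subseteq> U" using i' by (auto simp: U_def)
          thus ?thesis using True ij by (auto simp: D'_def)
        next
          case False
          hence "j \<in> {1..k}" using j by auto
          thus ?thesis using dj i' ij \<open>i \<noteq> Suc k\<close> False
            by (simp add: D'_def disjoint_family_on_def)
        qed
      qed
    qed
    ultimately show ?case by blast
  qed
  obtain \<phi> D where cw: "\<forall>i\<in>{1..M}. \<phi> i \<in> set_pmf P \<and> D i \<subseteq> T (\<phi> i) \<and>
                 1 - \<epsilon> \<le> measure_pmf.prob (V (\<phi> i)) (D i)" and dj: "disjoint_family_on D {1..M}"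
    using ind[of M] by auto
  have code: "is_code Xn Yn (M, \<phi>, D)"
    using cw dj M PX by (auto simp: is_code_def T_def)
  have "err_prob V (M, \<phi>, D) = (\<Sum>i=1..M. 1 - measure_pmf.prob (V (\<phi> i)) (D i)) / real M"
    by (simp add: err_prob_def)
  also have "\<dots> \<le> (\<Sum>i=1..M. \<epsilon>) / real M"
  proof (intro divide_right_mono sum_mono)
    fix i assume "i \<in> {1..M}"
    thus "1 - measure_pmf.prob (V (\<phi> i)) (D i) \<le> \<epsilon>" using cw by fastforce
  qed simp
  also have "\<dots> = \<epsilon>" using M by simp
  finally have "err_prob V (M, \<phi>, D) \<le> Fd V P n r + real M / exp (real n * r)"
    by (simp add: \<epsilon>_def \<beta>_def c0_def)
  with code show ?thesis by (intro exI[of _ "(M, \<phi>, D)"]) (simp add: code_size_def)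
qed



definition cdist :: "('a, 'b) code \<Rightarrow> 'a pmf" where
  "cdist c = map_pmf (fst (snd c)) (pmf_of_set {1..fst c})"

lemma converse:
  fixes V :: "'a \<Rightarrow> 'b pmf"
  assumes code: "is_code Xn Yn c" and n: "0 < n"
  shows "Gd V (cdist c) Q n r - exp (real n * r) / real (code_size c) \<le> err_prob V c"
proof -
  obtain N \<phi> D where c: "c = (N, \<phi>, D)" by (cases c) auto
  have N: "1 \<le> N" and dj: "disjoint_family_on D {1..N}" using code by (auto simp: is_code_def c)
  define e where "e = exp (real n * r)"
  have e: "0 < e" by (simp add: e_def)
  define S where "S x = {y. 0 < pmf Q y \<and> ln (pmf (V x) y / pmf Q y) / real n < r}" for x
  have G: "Gd V (cdist c) Q n r = (\<Sum>i=1..N. measure_pmf.prob (V (\<phi> i)) (S (\<phi> i))) / real N"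
    using N by (simp add: Gd_def cdist_def c integral_pmf_of_set S_def)
  have each: "measure_pmf.prob (V (\<phi> i)) (S (\<phi> i))
      \<le> (1 - measure_pmf.prob (V (\<phi> i)) (D i)) + e * measure_pmf.prob Q (D i)" for i
  proof -
    let ?p = "V (\<phi> i)"
    have "measure_pmf.prob ?p (S (\<phi> i)) \<le> measure_pmf.prob ?p ((S (\<phi> i) \<inter> D i) \<union> (UNIV - D i))"
      by (rule measure_pmf.finite_measure_mono) auto
    also have "\<dots> \<le> measure_pmf.prob ?p (S (\<phi> i) \<inter> D i) + measure_pmf.prob ?p (UNIV - D i)"
      by (rule measure_Un_le) auto
    also have "measure_pmf.prob ?p (UNIV - D i) = 1 - measure_pmf.prob ?p (D i)"
      using measure_pmf.prob_compl[of "D i" ?p] by simp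
    also have "measure_pmf.prob ?p (S (\<phi> i) \<inter> D i) \<le> e * measure_pmf.prob Q (S (\<phi> i) \<inter> D i)"
    proof (rule prob_le_scaled)
      fix y assume y: "y \<in> S (\<phi> i) \<inter> D i"
      show "pmf ?p y \<le> e * pmf Q y"
      proof (cases "pmf ?p y = 0")
        case True thus ?thesis using e by simp
      next
        case False
        hence "0 < pmf ?p y" by (simp add: order_less_le)
        moreover have "0 < pmf Q y" using y by (simp add: S_def)
        ultimately show ?thesis using y ratio_iff[of "pmf ?p y" "pmf Q y" n r] n
          by (simp add: S_def e_def)
      qed
    qed (use e in simp)
    also have "\<dots> \<le> e * measure_pmf.prob Q (D i)"
      using e by (intro mult_left_mono measure_pmf.finite_measure_mono) auto
    finally show ?thesis by simp
  qed
  have sQ: "(\<Sum>i=1..N. measure_pmf.prob Q (D i)) \<le> 1"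
  proof -
    have "(\<Sum>i=1..N. measure_pmf.prob Q (D i)) = measure_pmf.prob Q (\<Union>i\<in>{1..N}. D i)"
      by (rule measure_pmf.finite_measure_finite_Union[symmetric]) (use dj in auto)
    also have "\<dots> \<le> 1" by simp
    finally show ?thesis .
  qed
  have "(\<Sum>i=1..N. measure_pmf.prob (V (\<phi> i)) (S (\<phi> i)))
      \<le> (\<Sum>i=1..N. (1 - measure_pmf.prob (V (\<phi> i)) (D i)) + e * measure_pmf.prob Q (D i))"
    by (rule sum_mono) (rule each)
  also have "\<dots> = (\<Sum>i=1..N. 1 - measure_pmf.prob (V (\<phi> i)) (D i)) + e * (\<Sum>i=1..N. measure_pmf.prob Q (D i))"
    by (simp add: sum.distrib sum_distrib_left)
  also have "\<dots> \<le> (\<Sum>i=1..N. 1 - measure_pmf.prob (V (\<phi> i)) (D i)) + e"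
    using sQ e by (simp add: mult_left_le)
  finally have "(\<Sum>i=1..N. measure_pmf.prob (V (\<phi> i)) (S (\<phi> i))) / real N
      \<le> ((\<Sum>i=1..N. 1 - measure_pmf.prob (V (\<phi> i)) (D i)) + e) / real N"
    by (rule divide_right_mono) simp
  also have "\<dots> = err_prob V c + e / real N"
    by (simp add: err_prob_def c add_divide_distrib)
  finally show ?thesis using G by (simp add: c code_size_def e_def)
qed

lemma cdist_in:
  assumes "is_code Xn Yn c"
  shows "set_pmf (cdist c) \<subseteq> Xn"
proof -
  obtain N \<phi> D where c: "c = (N, \<phi>, D)" by (cases c) auto
  have N: "1 \<le> N" and "\<forall>i\<in>{1..N}. \<phi> i \<in> Xn" using assms by (auto simp: is_code_def c)
  thus ?thesis by (auto simp: cdist_def c)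
qed

lemma Gd_mono: "R1 \<le> R2 \<Longrightarrow> Gd V P Q n R1 \<le> Gd V P Q n R2"
  unfolding Gd_def
  by (intro integral_mono_AE) (auto intro!: measure_pmf.finite_measure_mono)

lemma Jp_mono: "R1 \<le> R2 \<Longrightarrow> Jp W P Q R1 \<le> Jp W P Q R2"
  unfolding Jp_Gd by (intro Limsup_mono always_eventually allI) (simp add: Gd_mono)

lemma Ip_mono: "R1 \<le> R2 \<Longrightarrow> Ip W P R1 \<le> Ip W P R2"
  unfolding Ip_Jp by (rule Jp_mono)

lemma Lim_at_right_anti:
  fixes g :: "real \<Rightarrow> ereal"
  assumes mono: "\<And>a b. 0 < a \<Longrightarrow> a \<le> b \<Longrightarrow> g b \<le> g a"
  shows "Lim (at_right 0) g = (SUP \<gamma>\<in>{0<..}. g \<gamma>)"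
proof (rule tendsto_Lim)
  show "at_right (0::real) \<noteq> bot" by simp
  show "(g \<longlongrightarrow> (SUP \<gamma>\<in>{0<..}. g \<gamma>)) (at_right 0)"
  proof (rule order_tendstoI)
    fix a assume "a < (SUP \<gamma>\<in>{0<..}. g \<gamma>)"
    then obtain \<gamma>0 where g0: "0 < \<gamma>0" "a < g \<gamma>0" by (auto simp: less_SUP_iff)
    have "eventually (\<lambda>\<gamma>. 0 < \<gamma> \<and> \<gamma> < \<gamma>0) (at_right (0::real))"
      using g0 by (auto simp: eventually_at_right)
    thus "eventually (\<lambda>\<gamma>. a < g \<gamma>) (at_right 0)"
      by eventually_elim (use g0 mono in \<open>force intro: less_le_trans\<close>)
  next
    fix a assume a: "(SUP \<gamma>\<in>{0<..}. g \<gamma>) < a"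
    have "eventually (\<lambda>\<gamma>. 0 < \<gamma>) (at_right (0::real))" by (simp add: eventually_at_right_less)
    thus "eventually (\<lambda>\<gamma>. g \<gamma> < a) (at_right 0)"
      by eventually_elim (rule le_less_trans[OF SUP_upper a], simp)
  qed
qed

lemma diag:
  fixes A :: "nat \<Rightarrow> nat \<Rightarrow> bool"
  assumes ev: "\<And>k. eventually (A k) sequentially"
  shows "\<exists>\<kappa>. filterlim \<kappa> at_top sequentially \<and> eventually (\<lambda>n. A (\<kappa> n) n) sequentially"
proof -
  define Q where "Q k n \<longleftrightarrow> (\<forall>m\<ge>n. \<forall>j\<le>k. A j m)" for k n
  have QN: "\<exists>N. Q k N" for k
  proof -
    have "eventually (\<lambda>m. \<forall>j\<in>{..k}. A j m) sequentially"
      by (rule eventually_ball_finite) (auto intro: ev)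
    then obtain N where "\<forall>m\<ge>N. \<forall>j\<in>{..k}. A j m" by (auto simp: eventually_sequentially)
    thus ?thesis by (auto simp: Q_def)
  qed
  have Qmono: "Q k n" if "Q k N" "N \<le> n" for k N n using that by (auto simp: Q_def)
  define \<kappa> where "\<kappa> n = Max (insert 0 {k. k \<le> n \<and> Q k n})" for n
  have fin: "finite (insert 0 {k. k \<le> n \<and> Q k n})" for n by auto
  have lb: "k \<le> \<kappa> n" if "Q k n" "k \<le> n" for k n
    unfolding \<kappa>_def by (rule Max_ge[OF fin]) (use that in auto)
  have mem: "\<kappa> n \<in> insert 0 {k. k \<le> n \<and> Q k n}" for n
    unfolding \<kappa>_def by (rule Max_in[OF fin]) auto
  have "filterlim \<kappa> at_top sequentially"
  proof (unfold filterlim_at_top, intro allI)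
    fix Z :: nat
    obtain N where "Q Z N" using QN by auto
    hence h: "\<forall>n\<ge>max N Z. Z \<le> \<kappa> n" using Qmono lb by auto
    show "eventually (\<lambda>n. Z \<le> \<kappa> n) sequentially" unfolding eventually_sequentially
      by (rule exI[of _ "max N Z"]) (use h in blast)
  qed
  moreover have "eventually (\<lambda>n. A (\<kappa> n) n) sequentially"
  proof -
    obtain N where N: "Q 0 N" using QN by auto
    have "A (\<kappa> n) n" if "n \<ge> N" for n
    proof -
      have "Q (\<kappa> n) n" using mem[of n] Qmono[OF N that] by auto
      thus ?thesis by (auto simp: Q_def)
    qed
    thus ?thesis by (auto simp: eventually_sequentially)
  qed
  ultimately show ?thesis by blast
qed



lemma prob_one: "set_pmf p \<subseteq> A \<Longrightarrow> measure_pmf.prob p A = 1"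
  by (subst measure_pmf.prob_eq_1) (auto simp: AE_measure_pmf_iff)

definition triv :: "(nat \<Rightarrow> 'a set) \<Rightarrow> (nat \<Rightarrow> 'b set) \<Rightarrow> nat \<Rightarrow> ('a, 'b) code" where
  "triv X Y n = (1, \<lambda>_. SOME x. x \<in> X n, \<lambda>_. Y n)"

lemma triv_code:
  assumes "channel X Y W"
  shows "is_code (X n) (Y n) (triv X Y n)" "code_size (triv X Y n) = 1"
    "err_prob (W n) (triv X Y n) = 0"
proof -
  have ne: "X n \<noteq> {}" using assms by (auto simp: channel_def)
  hence x: "(SOME x. x \<in> X n) \<in> X n" by (auto intro: someI)
  show "is_code (X n) (Y n) (triv X Y n)" using x by (simp add: is_code_def triv_def disjoint_family_on_def)
  show "code_size (triv X Y n) = 1" by (simp add: code_size_def triv_def)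
  have "set_pmf (W n (SOME x. x \<in> X n)) \<subseteq> Y n" using assms x by (auto simp: channel_def)
  thus "err_prob (W n) (triv X Y n) = 0" by (simp add: err_prob_def triv_def prob_one)
qed

lemma triv_seq:
  assumes "channel X Y W"
  shows "triv X Y \<in> code_seqs X Y" "rate (triv X Y) = 0" "error W (triv X Y) = 0"
  using triv_code[OF assms]
  by (auto simp: code_seqs_def rate_def error_def Liminf_const Limsup_const zero_ereal_def)

lemma exp_lim: "0 < c \<Longrightarrow> (\<lambda>n. 2 * exp (real n * (- c))) \<longlonglongrightarrow> 0"
proof -
  assume c: "0 < c"
  have "(\<lambda>n. exp (- c) ^ n) \<longlonglongrightarrow> 0" by (rule LIMSEQ_power_zero) (use c in simp)
  hence "(\<lambda>n. 2 * exp (- c) ^ n) \<longlonglongrightarrow> 0" by (rule tendsto_mult_right_zero)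
  thus ?thesis by (simp only: exp_of_nat_mult)
qed

lemma ach_code:
  fixes s t :: "nat \<Rightarrow> real" and P :: "nat \<Rightarrow> 'a pmf" and W :: "nat \<Rightarrow> 'a \<Rightarrow> 'b pmf"
  assumes ch: "channel X Y W" and P: "P \<in> input_seqs X" and s: "\<And>n. 0 \<le> s n"
  shows "\<exists>\<Phi>\<in>code_seqs X Y. \<forall>n>0. s n \<le> ln (real (code_size (\<Phi> n))) / real n \<and>
           err_prob (W n) (\<Phi> n) \<le> Fd (W n) (P n) n (t n) + 2 * exp (real n * (s n - t n))"
proof -
  have "\<exists>c. is_code (X n) (Y n) c \<and> (0 < n \<longrightarrow> s n \<le> ln (real (code_size c)) / real n \<and>
           err_prob (W n) c \<le> Fd (W n) (P n) n (t n) + 2 * exp (real n * (s n - t n)))" for n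
  proof (cases "n = 0")
    case True thus ?thesis using triv_code[OF ch] by blast
  next
    case False
    hence n: "0 < n" by simp
    define M where "M = nat \<lceil>exp (real n * s n)\<rceil>"
    have e1: "1 \<le> exp (real n * s n)" using s[of n] by simp
    have "(1::int) \<le> \<lceil>exp (real n * s n)\<rceil>" by (simp add: one_le_ceiling)
    hence "nat 1 \<le> M" unfolding M_def by (rule nat_mono)
    hence M1: "1 \<le> M" by simp
    have Mle: "real M \<le> 2 * exp (real n * s n)" using e1 unfolding M_def
      by (smt (verit) of_nat_nat ceiling_correct ceiling_le_zero)
    have Mge: "exp (real n * s n) \<le> real M" unfolding M_def
      by (metis of_nat_nat real_nat_ceiling_ge)
    have PX: "set_pmf (P n) \<subseteq> X n" using P by (auto simp: input_seqs_def)
    have VY: "\<And>x. x \<in> X n \<Longrightarrow> set_pmf (W n x) \<subseteq> Y n" using ch by (auto simp: channel_def)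
    obtain c where c: "is_code (X n) (Y n) c" "code_size c = M"
      "err_prob (W n) c \<le> Fd (W n) (P n) n (t n) + real M / exp (real n * t n)"
      using feinstein[where V="W n" and P="P n" and Xn="X n" and Yn="Y n" and n=n and M=M and r="t n", OF PX VY n M1] by blast
    have "real M / exp (real n * t n) \<le> 2 * exp (real n * s n) / exp (real n * t n)"
      by (rule divide_right_mono[OF Mle]) simp
    also have "\<dots> = 2 * exp (real n * (s n - t n))"
      by (simp add: exp_diff right_diff_distrib)
    finally have err: "err_prob (W n) c \<le> Fd (W n) (P n) n (t n) + 2 * exp (real n * (s n - t n))"
      using c(3) by simp
    have "real n * s n \<le> ln (real M)"
      using Mge e1 by (metis exp_le_cancel_iff exp_ln less_le_trans zero_less_one)
    hence "s n \<le> ln (real (code_size c)) / real n" using n c(2)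
      by (simp add: pos_le_divide_eq mult.commute)
    with c err show ?thesis by blast
  qed
  then obtain \<Phi> where "\<And>n. is_code (X n) (Y n) (\<Phi> n) \<and> (0 < n \<longrightarrow> s n \<le> ln (real (code_size (\<Phi> n))) / real n \<and>
           err_prob (W n) (\<Phi> n) \<le> Fd (W n) (P n) n (t n) + 2 * exp (real n * (s n - t n)))"
    by metis
  thus ?thesis by (auto simp: code_seqs_def)
qed

lemma conv_asym:
  assumes \<Phi>: "\<Phi> \<in> code_seqs X Y" and r: "ereal r < rate \<Phi>"
  shows "Jp W (\<lambda>n. cdist (\<Phi> n)) Q r \<le> error W \<Phi>"
proof -
  obtain z where z: "ereal r < z" "z < rate \<Phi>" using dense[OF r] by auto
  then obtain r2 where z2: "z = ereal r2" by (cases z) auto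
  have r2: "r < r2" using z z2 by simp
  have "ereal r2 < liminf (\<lambda>n. ereal (ln (real (code_size (\<Phi> n))) / real n))"
    using z z2 by (simp add: rate_def)
  hence ev: "eventually (\<lambda>n. ereal r2 < ereal (ln (real (code_size (\<Phi> n))) / real n)) sequentially"
    by (rule less_LiminfD)
  have bound: "eventually (\<lambda>n. ereal (Gd (W n) (cdist (\<Phi> n)) (Q n) n r)
       \<le> ereal (2 * exp (real n * (- (r2 - r)))) + ereal (err_prob (W n) (\<Phi> n))) sequentially"
    using ev eventually_gt_at_top[of 0]
  proof eventually_elim
    case (elim n)
    have code: "is_code (X n) (Y n) (\<Phi> n)" using \<Phi> by (auto simp: code_seqs_def)
    define N where "N = real (code_size (\<Phi> n))"
    have "r2 < ln N / real n" using elim by (simp add: N_def)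
    hence "real n * r2 < ln N" using elim by (simp add: pos_less_divide_eq mult.commute)
    moreover have N1: "1 \<le> N" using code by (cases "\<Phi> n") (auto simp: N_def is_code_def code_size_def)
    ultimately have NL: "exp (real n * r2) < N"
      by (metis exp_less_cancel_iff exp_ln less_le_trans zero_less_one)
    have "exp (real n * r) / N \<le> exp (real n * r) / exp (real n * r2)"
      using NL N1 by (intro divide_left_mono) (auto intro!: mult_pos_pos)
    also have "\<dots> = exp (real n * (- (r2 - r)))" by (simp add: exp_diff[symmetric] algebra_simps)
    also have "\<dots> \<le> 2 * exp (real n * (- (r2 - r)))" by simp
    finally have "exp (real n * r) / N \<le> 2 * exp (real n * (- (r2 - r)))" .
    moreover have "Gd (W n) (cdist (\<Phi> n)) (Q n) n r - exp (real n * r) / N \<le> err_prob (W n) (\<Phi> n)"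
      using converse[OF code elim(2)] by (simp add: N_def)
    ultimately show ?case by simp
  qed
  have "Jp W (\<lambda>n. cdist (\<Phi> n)) Q r \<le> limsup (\<lambda>n. ereal (2 * exp (real n * (- (r2 - r)))) + ereal (err_prob (W n) (\<Phi> n)))"
    unfolding Jp_Gd by (rule Limsup_mono[OF bound])
  also have "\<dots> = ereal 0 + error W \<Phi>" unfolding error_def
    by (rule ereal_limsup_lim_add) (use exp_lim[of "r2 - r"] r2 in \<open>auto simp: lim_ereal\<close>)
  finally show ?thesis by (simp add: zero_ereal_def[symmetric])
qed



lemma Lim_Ip: "Lim (at_right 0) (\<lambda>\<gamma>. Ip W P (R - \<gamma>)) = (SUP \<gamma>\<in>{0<..}. Ip W P (R - \<gamma>))"
  by (rule Lim_at_right_anti) (auto intro: Ip_mono)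

lemma Lim_Jp: "Lim (at_right 0) (\<lambda>\<gamma>. Jp W P Q (R - \<gamma>)) = (SUP \<gamma>\<in>{0<..}. Jp W P Q (R - \<gamma>))"
  by (rule Lim_at_right_anti) (auto intro: Jp_mono)

lemma Ip_nonneg: "0 \<le> Ip W P R"
proof -
  have "limsup (\<lambda>n. 0::ereal) \<le> limsup (\<lambda>n. ereal (Fd (W n) (P n) n R))"
    by (rule Limsup_mono) (auto simp: Fd_def integral_nonneg_AE)
  thus ?thesis by (simp add: Ip_Fd Limsup_const)
qed

lemma out_seq:
  assumes "channel X Y W" "P \<in> input_seqs X"
  shows "(\<lambda>n. out_dist (P n) (W n)) \<in> output_seqs Y"
  using assms by (fastforce simp: output_seqs_def input_seqs_def channel_def out_dist_def set_bind_pmf)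

lemma cdist_seq:
  assumes "\<Phi> \<in> code_seqs X Y"
  shows "(\<lambda>n. cdist (\<Phi> n)) \<in> input_seqs X"
  unfolding input_seqs_def
proof (intro CollectI allI)
  fix n show "set_pmf (cdist (\<Phi> n)) \<subseteq> X n"
    using assms by (intro cdist_in[where Xn="X n" and Yn="Y n"]) (simp add: code_seqs_def)
qed

lemma ach_Cp:
  assumes ch: "channel X Y W" and P: "P \<in> input_seqs X" and R: "0 < R"
    and L: "(SUP \<gamma>\<in>{0<..}. Ip W P (R - \<gamma>)) < ereal l"
  shows "Cp X Y W R \<le> ereal l"
proof -
  obtain z where z: "(SUP \<gamma>\<in>{0<..}. Ip W P (R - \<gamma>)) < z" "z < ereal l" using dense[OF L] by auto
  then obtain m where zm: "z = ereal m" by (cases z) auto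
  have ml: "m < l" using z zm by simp
  define \<gamma> where "\<gamma> k = R / (3 * real (Suc k))" for k
  have \<gamma>pos: "0 < \<gamma> k" for k using R by (simp add: \<gamma>_def)
  have \<gamma>le: "\<gamma> k \<le> R / 3" for k using R by (simp add: \<gamma>_def field_simps)
  define a where "a k n = Fd (W n) (P n) n (R - \<gamma> k) + 2 * exp (real n * (- \<gamma> k))" for k n
  have ev: "eventually (\<lambda>n. a k n < l) sequentially" for k
  proof -
    have "Ip W P (R - \<gamma> k) \<le> (SUP \<gamma>\<in>{0<..}. Ip W P (R - \<gamma>))"
      by (rule SUP_upper) (use \<gamma>pos in simp)
    hence "limsup (\<lambda>n. ereal (Fd (W n) (P n) n (R - \<gamma> k))) < ereal m"
      using z zm by (simp add: Ip_Fd)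
    hence e1: "eventually (\<lambda>n. ereal (Fd (W n) (P n) n (R - \<gamma> k)) < ereal m) sequentially"
      by (rule Limsup_lessD)
    have e2: "eventually (\<lambda>n. 2 * exp (real n * (- \<gamma> k)) < l - m) sequentially"
      by (rule order_tendstoD(2)[OF exp_lim[OF \<gamma>pos]]) (use ml in simp)
    from e1 e2 show ?thesis by eventually_elim (simp add: a_def)
  qed
  obtain \<kappa> where \<kappa>: "filterlim \<kappa> at_top sequentially" and ev\<kappa>: "eventually (\<lambda>n. a (\<kappa> n) n < l) sequentially"
    using diag[of "\<lambda>k n. a k n < l", OF ev] by blast
  define s where "s n = R - 2 * \<gamma> (\<kappa> n)" for n
  define t where "t n = R - \<gamma> (\<kappa> n)" for n
  have s0: "0 \<le> s n" for n using \<gamma>le[of "\<kappa> n"] R by (simp add: s_def)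
  from ach_code[where t=t, OF ch P s0] obtain \<Phi> where \<Phi>: "\<Phi> \<in> code_seqs X Y" and
    \<Phi>n: "\<forall>n>0. s n \<le> ln (real (code_size (\<Phi> n))) / real n \<and>
           err_prob (W n) (\<Phi> n) \<le> Fd (W n) (P n) n (t n) + 2 * exp (real n * (s n - t n))"
    by (rule bexE)
  have err: "error W \<Phi> \<le> ereal l"
  proof -
    have "eventually (\<lambda>n. ereal (err_prob (W n) (\<Phi> n)) \<le> ereal l) sequentially"
      using ev\<kappa> eventually_gt_at_top[of 0]
    proof eventually_elim
      case (elim n)
      have "err_prob (W n) (\<Phi> n) \<le> a (\<kappa> n) n"
        using \<Phi>n elim(2) by (simp add: a_def s_def t_def)
      thus ?case using elim(1) by simp
    qed
    hence "error W \<Phi> \<le> limsup (\<lambda>n. ereal l)" unfolding error_def by (rule Limsup_mono)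
    thus ?thesis by (simp add: Limsup_const)
  qed
  have rate: "ereal R \<le> rate \<Phi>"
  proof -
    have "(\<lambda>n. inverse (real (Suc (\<kappa> n)))) \<longlonglongrightarrow> 0"
      by (rule filterlim_compose[OF LIMSEQ_inverse_real_of_nat \<kappa>])
    hence "(\<lambda>n. R - 2 * (R / 3 * inverse (real (Suc (\<kappa> n))))) \<longlonglongrightarrow> R - 2 * (R / 3 * 0)"
      by (intro tendsto_intros)
    moreover have "\<And>n. R - 2 * (R / 3 * inverse (real (Suc (\<kappa> n)))) = s n"
      by (simp add: s_def \<gamma>_def field_simps)
    ultimately have "s \<longlonglongrightarrow> R" by simp
    hence "(\<lambda>n. ereal (s n)) \<longlonglongrightarrow> ereal R" by (simp add: lim_ereal)
    hence "liminf (\<lambda>n. ereal (s n)) = ereal R" by (rule lim_imp_Liminf[rotated]) simp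
    moreover have "liminf (\<lambda>n. ereal (s n)) \<le> rate \<Phi>" unfolding rate_def
      by (rule Liminf_mono) (use \<Phi>n in \<open>auto simp: eventually_sequentially intro!: exI[of _ 1]\<close>)
    ultimately show ?thesis by simp
  qed
  have "Cp X Y W R \<le> error W \<Phi>" unfolding Cp_def
    by (rule Inf_lower) (use \<Phi> rate in blast)
  with err show ?thesis by simp
qed



lemma Cp_part:
  fixes X :: "nat \<Rightarrow> 'a set" and Y :: "nat \<Rightarrow> 'b set" and W :: "nat \<Rightarrow> 'a \<Rightarrow> 'b pmf"
  assumes ch: "channel X Y W"
  shows "Cp X Y W R = (INF P\<in>input_seqs X. Lim (at_right (0::real)) (\<lambda>\<gamma>. Ip W P (R - \<gamma>)))
          \<and> Cp X Y W R = (INF P\<in>input_seqs X. SUP Q\<in>output_seqs Y.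
                             Lim (at_right (0::real)) (\<lambda>\<gamma>. Jp W P Q (R - \<gamma>)))"
proof -
  define A where "A = (INF P\<in>input_seqs X. Lim (at_right (0::real)) (\<lambda>\<gamma>. Ip W P (R - \<gamma>)))"
  define B where "B = (INF P\<in>input_seqs X. SUP Q\<in>output_seqs Y.
                             Lim (at_right (0::real)) (\<lambda>\<gamma>. Jp W P Q (R - \<gamma>)))"
  have AB: "A \<le> B" unfolding A_def B_def
  proof (rule INF_mono)
    fix P assume P: "P \<in> input_seqs X"
    have "Lim (at_right (0::real)) (\<lambda>\<gamma>. Ip W P (R - \<gamma>))
        = Lim (at_right (0::real)) (\<lambda>\<gamma>. Jp W P (\<lambda>n. out_dist (P n) (W n)) (R - \<gamma>))"
      by (simp add: Ip_Jp)
    also have "\<dots> \<le> (SUP Q\<in>output_seqs Y. Lim (at_right (0::real)) (\<lambda>\<gamma>. Jp W P Q (R - \<gamma>)))"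
      by (rule SUP_upper) (rule out_seq[OF ch P])
    finally show "\<exists>P'\<in>input_seqs X. Lim (at_right (0::real)) (\<lambda>\<gamma>. Ip W P' (R - \<gamma>))
        \<le> (SUP Q\<in>output_seqs Y. Lim (at_right (0::real)) (\<lambda>\<gamma>. Jp W P Q (R - \<gamma>)))"
      using P by blast
  qed
  have BC: "B \<le> Cp X Y W R" unfolding Cp_def
  proof (rule Inf_greatest)
    fix x assume "x \<in> {error W \<Phi> |\<Phi>. \<Phi> \<in> code_seqs X Y \<and> ereal R \<le> rate \<Phi>}"
    then obtain \<Phi> where x: "x = error W \<Phi>" and \<Phi>: "\<Phi> \<in> code_seqs X Y" and r: "ereal R \<le> rate \<Phi>"
      by blast
    have "B \<le> (SUP Q\<in>output_seqs Y. Lim (at_right (0::real)) (\<lambda>\<gamma>. Jp W (\<lambda>n. cdist (\<Phi> n)) Q (R - \<gamma>)))"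
      unfolding B_def by (rule INF_lower) (rule cdist_seq[OF \<Phi>])
    also have "\<dots> \<le> error W \<Phi>"
    proof (rule SUP_least)
      fix Q :: "nat \<Rightarrow> 'b pmf"
      show "Lim (at_right (0::real)) (\<lambda>\<gamma>. Jp W (\<lambda>n. cdist (\<Phi> n)) Q (R - \<gamma>)) \<le> error W \<Phi>"
        unfolding Lim_Jp
      proof (rule SUP_least)
        fix \<gamma> :: real assume "\<gamma> \<in> {0<..}"
        hence "ereal (R - \<gamma>) < ereal R" by simp
        hence "ereal (R - \<gamma>) < rate \<Phi>" using r by (rule less_le_trans)
        thus "Jp W (\<lambda>n. cdist (\<Phi> n)) Q (R - \<gamma>) \<le> error W \<Phi>" by (rule conv_asym[OF \<Phi>])
      qed
    qed
    finally show "B \<le> x" using x by simp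
  qed
  have CA: "Cp X Y W R \<le> A" unfolding A_def
  proof (rule INF_greatest)
    fix P assume P: "P \<in> input_seqs X"
    define L where "L = (SUP \<gamma>\<in>{0<..}. Ip W P (R - \<gamma>))"
    have L0: "0 \<le> L" unfolding L_def
      by (rule order_trans[OF Ip_nonneg SUP_upper[of 1]]) simp
    have "Cp X Y W R \<le> L"
    proof (cases "R \<le> 0")
      case True
      have "Cp X Y W R \<le> error W (triv X Y)" unfolding Cp_def
        by (rule Inf_lower) (use triv_seq[OF ch] True in auto)
      thus ?thesis using triv_seq[OF ch] L0 by simp
    next
      case False
      hence R: "0 < R" by simp
      show ?thesis
      proof (rule ereal_le_epsilon2)
        fix e :: real assume e: "0 < e"
        show "Cp X Y W R \<le> L + ereal e"
        proof (cases L)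
          case (real l)
          have "Cp X Y W R \<le> ereal (l + e)"
            by (rule ach_Cp[OF ch P R]) (use real e in \<open>simp add: L_def\<close>)
          thus ?thesis using real by simp
        qed (use L0 in auto)
      qed
    qed
    thus "Cp X Y W R \<le> Lim (at_right 0) (\<lambda>\<gamma>. Ip W P (R - \<gamma>))" by (simp add: Lim_Ip L_def)
  qed
  from AB BC CA show ?thesis unfolding A_def[symmetric] B_def[symmetric]
    by (meson order_antisym order_trans)
qed

lemma Ceps_part:
  fixes X :: "nat \<Rightarrow> 'a set" and Y :: "nat \<Rightarrow> 'b set" and W :: "nat \<Rightarrow> 'a \<Rightarrow> 'b pmf"
  assumes ch: "channel X Y W" and eps: "0 \<le> \<epsilon>"
  shows "C_eps X Y W \<epsilon> = (SUP P\<in>input_seqs X. I_eps W P \<epsilon>)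
          \<and> C_eps X Y W \<epsilon> = (SUP P\<in>input_seqs X. INF Q\<in>output_seqs Y. J_eps W P Q \<epsilon>)"
proof -
  define A where "A = (SUP P\<in>input_seqs X. I_eps W P \<epsilon>)"
  define B where "B = (SUP P\<in>input_seqs X. INF Q\<in>output_seqs Y. J_eps W P Q \<epsilon>)"
  define Ce where "Ce = C_eps X Y W \<epsilon>"
  have BA: "B \<le> A" unfolding A_def B_def
  proof (rule SUP_mono)
    fix P assume P: "P \<in> input_seqs X"
    have "(INF Q\<in>output_seqs Y. J_eps W P Q \<epsilon>) \<le> J_eps W P (\<lambda>n. out_dist (P n) (W n)) \<epsilon>"
      by (rule INF_lower) (rule out_seq[OF ch P])
    also have "\<dots> = I_eps W P \<epsilon>" by (simp add: I_eps_def J_eps_def Ip_Jp)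
    finally show "\<exists>P'\<in>input_seqs X. (INF Q\<in>output_seqs Y. J_eps W P Q \<epsilon>) \<le> I_eps W P' \<epsilon>"
      using P by blast
  qed
  have CB: "Ce \<le> B" unfolding Ce_def C_eps_def
  proof (rule Sup_least)
    fix x assume "x \<in> {rate \<Phi> |\<Phi>. \<Phi> \<in> code_seqs X Y \<and> error W \<Phi> \<le> ereal \<epsilon>}"
    then obtain \<Phi> where x: "x = rate \<Phi>" and \<Phi>: "\<Phi> \<in> code_seqs X Y" and er: "error W \<Phi> \<le> ereal \<epsilon>"
      by blast
    have "rate \<Phi> \<le> (INF Q\<in>output_seqs Y. J_eps W (\<lambda>n. cdist (\<Phi> n)) Q \<epsilon>)"
    proof (rule INF_greatest)
      fix Q :: "nat \<Rightarrow> 'b pmf"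
      show "rate \<Phi> \<le> J_eps W (\<lambda>n. cdist (\<Phi> n)) Q \<epsilon>" unfolding J_eps_def le_Sup_iff
      proof (intro allI impI)
        fix y assume y: "y < rate \<Phi>"
        obtain z where z: "y < z" "z < rate \<Phi>" using dense[OF y] by auto
        then obtain r where zr: "z = ereal r" by (cases z) auto
        have "Jp W (\<lambda>n. cdist (\<Phi> n)) Q r \<le> error W \<Phi>"
          by (rule conv_asym[OF \<Phi>]) (use z zr in simp)
        hence "Jp W (\<lambda>n. cdist (\<Phi> n)) Q r \<le> ereal \<epsilon>" using er by simp
        thus "\<exists>a\<in>{ereal R |R. Jp W (\<lambda>n. cdist (\<Phi> n)) Q R \<le> ereal \<epsilon>}. y < a"
          using z zr by blast
      qed
    qed
    also have "\<dots> \<le> B" unfolding B_def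
      by (rule SUP_upper) (rule cdist_seq[OF \<Phi>])
    finally show "x \<le> B" using x by simp
  qed
  have C0: "0 \<le> Ce" unfolding Ce_def C_eps_def
    by (rule Sup_upper2[of 0]) (use triv_seq[OF ch] eps in auto)
  have AC: "A \<le> Ce" unfolding A_def
  proof (rule SUP_least)
    fix P assume P: "P \<in> input_seqs X"
    show "I_eps W P \<epsilon> \<le> Ce" unfolding I_eps_def
    proof (rule Sup_least)
      fix x assume "x \<in> {ereal R |R. Ip W P R \<le> ereal \<epsilon>}"
      then obtain R where x: "x = ereal R" and IR: "Ip W P R \<le> ereal \<epsilon>" by blast
      have "ereal R \<le> Ce"
      proof (rule ereal_le_epsilon2)
        fix \<delta> :: real assume \<delta>: "0 < \<delta>"
        show "ereal R \<le> Ce + ereal \<delta>"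
        proof (cases "R - \<delta> \<le> 0")
          case True
          hence "ereal R \<le> 0 + ereal \<delta>" by simp
          also have "\<dots> \<le> Ce + ereal \<delta>" using C0 by (intro add_right_mono)
          finally show ?thesis .
        next
          case False
          define s where "s (n::nat) = R - \<delta>" for n
          define t where "t (n::nat) = R" for n
          have s0: "0 \<le> s n" for n using False by (simp add: s_def)
          from ach_code[where t=t, OF ch P s0] obtain \<Phi> where \<Phi>: "\<Phi> \<in> code_seqs X Y" and
            \<Phi>n: "\<forall>n>0. s n \<le> ln (real (code_size (\<Phi> n))) / real n \<and>
               err_prob (W n) (\<Phi> n) \<le> Fd (W n) (P n) n (t n) + 2 * exp (real n * (s n - t n))"
            by (rule bexE)
          have e1: "ereal (err_prob (W n) (\<Phi> n)) \<le> ereal (2 * exp (real n * (- \<delta>))) + ereal (Fd (W n) (P n) n R)"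
            and r1: "R - \<delta> \<le> ln (real (code_size (\<Phi> n))) / real n" if "0 < n" for n
          proof -
            have h: "s n \<le> ln (real (code_size (\<Phi> n))) / real n \<and>
               err_prob (W n) (\<Phi> n) \<le> Fd (W n) (P n) n (t n) + 2 * exp (real n * (s n - t n))"
              using \<Phi>n that by blast
            show "ereal (err_prob (W n) (\<Phi> n)) \<le> ereal (2 * exp (real n * (- \<delta>))) + ereal (Fd (W n) (P n) n R)"
              using h by (simp add: s_def t_def)
            show "R - \<delta> \<le> ln (real (code_size (\<Phi> n))) / real n"
              using h by (simp add: s_def)
          qed
          have "error W \<Phi> \<le> limsup (\<lambda>n. ereal (2 * exp (real n * (- \<delta>))) + ereal (Fd (W n) (P n) n R))"
            unfolding error_def
            by (rule Limsup_mono, rule eventually_mono[OF eventually_gt_at_top[of 0]], rule e1)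
          also have "\<dots> = ereal 0 + Ip W P R" unfolding Ip_Fd
            by (rule ereal_limsup_lim_add) (use exp_lim[OF \<delta>] in \<open>auto simp: lim_ereal\<close>)
          finally have err: "error W \<Phi> \<le> ereal \<epsilon>" using IR by (simp add: zero_ereal_def[symmetric])
          have "liminf (\<lambda>n. ereal (R - \<delta>)) \<le> rate \<Phi>" unfolding rate_def
            by (rule Liminf_mono, rule eventually_mono[OF eventually_gt_at_top[of 0]]) (use r1 in simp)
          hence "ereal (R - \<delta>) \<le> rate \<Phi>" by (simp add: Liminf_const)
          also have "rate \<Phi> \<le> Ce" unfolding Ce_def C_eps_def
            by (rule Sup_upper) (use \<Phi> err in blast)
          finally have "ereal (R - \<delta>) \<le> Ce" .
          thus ?thesis using C0 by (cases Ce) auto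
        qed
      qed
      thus "x \<le> Ce" using x by simp
    qed
  qed
  from BA CB AC show ?thesis unfolding A_def[symmetric] B_def[symmetric] Ce_def[symmetric]
    by (meson order_antisym order_trans)
qed

theorem theorem3:
  fixes X :: "nat \<Rightarrow> 'a set" and Y :: "nat \<Rightarrow> 'b set" and W :: "nat \<Rightarrow> 'a \<Rightarrow> 'b pmf"
  assumes "channel X Y W"
  shows "(\<forall>R::real.
            Cp X Y W R = (INF P\<in>input_seqs X. Lim (at_right (0::real)) (\<lambda>\<gamma>. Ip W P (R - \<gamma>)))
          \<and> Cp X Y W R = (INF P\<in>input_seqs X. SUP Q\<in>output_seqs Y.
                             Lim (at_right (0::real)) (\<lambda>\<gamma>. Jp W P Q (R - \<gamma>))))
       \<and> (\<forall>\<epsilon>::real. 0 \<le> \<epsilon> \<and> \<epsilon> < 1 \<longrightarrow>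
            C_eps X Y W \<epsilon> = (SUP P\<in>input_seqs X. I_eps W P \<epsilon>)
          \<and> C_eps X Y W \<epsilon> = (SUP P\<in>input_seqs X. INF Q\<in>output_seqs Y. J_eps W P Q \<epsilon>))"
  using Cp_part[OF assms] Ceps_part[OF assms] by blast


end
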